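(* Assume $(G)$ and let $\lambda\in(0,\lambda_1)$. Then the set $\{\mu>0:\ (\mathcal Q_{\lambda,\mu})\text{ has a solution}\}$ is bounded above, i.e. $\mu^*(\lambda):=\sup\{\mu>0:(\mathcal Q_{\lambda,\mu})\text{ has a solution}\}<+\infty$.
   Context: Let $N\ge3$, $\Omega\subset\mathbb R^N$ a bounded domain with smooth boundary, $2^*=2N/(N-2)$, $g\in H^{1/2}(\partial\Omega)\cap C(\partial\Omega)$ satisfying $(G)$: $g\ge0$ and $g\not\equiv0$. Let $\varphi$ be the harmonic function in $\Omega$ with $\varphi=g$ on $\partial\Omega$ (so $\varphi\ge0$). $\lambda_1$ is the first eigenvalue of $-\Delta$ on $H_0^1(\Omega)$. For $\lambda,\mu\ge0$, a solution of $(\mathcal Q_{\lambda,\mu})$ is a function $v\in H_0^1(\Omega)$ with $v>0$ in $\Omega$ which weakly solves $-\Delta v=\lambda(v+\mu\varphi)+(v+\mu\varphi)^{2^*-1}$ in $\Omega$. *)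

theory Defs
  imports "HOL-Analysis.Analysis"
begin

definition pdiff :: "'n::finite \<Rightarrow> (real^'n \<Rightarrow> real) \<Rightarrow> real^'n \<Rightarrow> real" where
  "pdiff i f x = deriv (\<lambda>t. f (x + t *\<^sub>R axis i 1)) 0"

definition grad_cl :: "(real^'n::finite \<Rightarrow> real) \<Rightarrow> real^'n \<Rightarrow> real^'n" where
  "grad_cl f x = (\<chi> i. pdiff i f x)"

definition smooth_on :: "(real^'n::finite) set \<Rightarrow> (real^'n \<Rightarrow> real) \<Rightarrow> bool" where
  "smooth_on S f \<longleftrightarrow>
     (\<forall>is. continuous_on S (foldr pdiff is f) \<and>
        (\<forall>i. \<forall>x\<in>S. (\<lambda>t. foldr pdiff is f (x + t *\<^sub>R axis i 1)) field_differentiable (at 0)))"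

(* smooth boundary: locally, after an orthogonal change of coordinates, the domain is the
   region above the graph of a C^infinity function *)
definition smooth_boundary :: "(real^'n::finite) set \<Rightarrow> bool" where
  "smooth_boundary \<Omega> \<longleftrightarrow>
     (\<forall>x0\<in>frontier \<Omega>. \<exists>r>0. \<exists>(Q::real^'n \<Rightarrow> real^'n) (k::'n) (\<gamma>::real^'n \<Rightarrow> real).
        orthogonal_transformation Q \<and> smooth_on UNIV \<gamma> \<and>
        (\<forall>(x::real^'n) (t::real). \<gamma> (x + t *\<^sub>R axis k (1::real)) = \<gamma> x) \<and>
        \<Omega> \<inter> ball x0 r = {x \<in> ball x0 r. (Q x) $ k > \<gamma> (Q x)})"

definition test_fun :: "(real^'n::finite) set \<Rightarrow> (real^'n \<Rightarrow> real) \<Rightarrow> bool" where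
  "test_fun \<Omega> \<psi> \<longleftrightarrow> smooth_on UNIV \<psi> \<and> compact (closure {x. \<psi> x \<noteq> 0}) \<and>
      closure {x. \<psi> x \<noteq> 0} \<subseteq> \<Omega>"

definition L2_on :: "(real^'n::finite) set \<Rightarrow> (real^'n \<Rightarrow> real) \<Rightarrow> bool" where
  "L2_on \<Omega> u \<longleftrightarrow> u \<in> borel_measurable (lebesgue_on \<Omega>) \<and>
      set_integrable lebesgue \<Omega> (\<lambda>x. (u x)\<^sup>2)"

definition weak_grad :: "(real^'n::finite) set \<Rightarrow> (real^'n \<Rightarrow> real) \<Rightarrow> (real^'n \<Rightarrow> real^'n) \<Rightarrow> bool" where
  "weak_grad \<Omega> u w \<longleftrightarrow>
     (\<forall>\<psi> i. test_fun \<Omega> \<psi> \<longrightarrow>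
        set_integrable lebesgue \<Omega> (\<lambda>x. u x * pdiff i \<psi> x) \<and>
        set_integrable lebesgue \<Omega> (\<lambda>x. w x $ i * \<psi> x) \<and>
        (LINT x:\<Omega>|lebesgue. u x * pdiff i \<psi> x) = - (LINT x:\<Omega>|lebesgue. w x $ i * \<psi> x))"

definition H1 :: "(real^'n::finite) set \<Rightarrow> (real^'n \<Rightarrow> real) \<Rightarrow> (real^'n \<Rightarrow> real^'n) \<Rightarrow> bool" where
  "H1 \<Omega> u w \<longleftrightarrow> L2_on \<Omega> u \<and> (\<forall>i. L2_on \<Omega> (\<lambda>x. w x $ i)) \<and> weak_grad \<Omega> u w"

definition H10 :: "(real^'n::finite) set \<Rightarrow> (real^'n \<Rightarrow> real) \<Rightarrow> (real^'n \<Rightarrow> real^'n) \<Rightarrow> bool" where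
  "H10 \<Omega> u w \<longleftrightarrow> H1 \<Omega> u w \<and>
     (\<exists>\<psi>. (\<forall>k. test_fun \<Omega> (\<psi> k)) \<and>
        (\<lambda>k. (LINT x:\<Omega>|lebesgue. (u x - \<psi> k x)\<^sup>2) +
             (LINT x:\<Omega>|lebesgue. (norm (w x - grad_cl (\<psi> k) x))\<^sup>2)) \<longlonglongrightarrow> 0)"

(* first Dirichlet eigenvalue of -Laplacian: infimum of the Rayleigh quotient on H^1_0 *)
definition lambda1 :: "(real^'n::finite) set \<Rightarrow> real" where
  "lambda1 \<Omega> = Inf {(LINT x:\<Omega>|lebesgue. (norm (w x))\<^sup>2) / (LINT x:\<Omega>|lebesgue. (u x)\<^sup>2) | u w.
                      H10 \<Omega> u w \<and> (LINT x:\<Omega>|lebesgue. (u x)\<^sup>2) > 0}"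

(* g in H^{1/2}(boundary) (for continuous g): g is the trace of a function in H^1(Omega)
   continuous up to the boundary *)
definition H_half_boundary :: "(real^'n::finite) set \<Rightarrow> (real^'n \<Rightarrow> real) \<Rightarrow> bool" where
  "H_half_boundary \<Omega> g \<longleftrightarrow>
     (\<exists>u w. H1 \<Omega> u w \<and> continuous_on (closure \<Omega>) u \<and> (\<forall>x\<in>frontier \<Omega>. u x = g x))"

definition harmonic_on :: "(real^'n::finite) set \<Rightarrow> (real^'n \<Rightarrow> real) \<Rightarrow> bool" where
  "harmonic_on \<Omega> f \<longleftrightarrow>
     (\<exists>G H. (\<forall>x\<in>\<Omega>. (f has_derivative (\<lambda>h. G x \<bullet> h)) (at x)) \<and>
            (\<forall>x\<in>\<Omega>. (G has_derivative H x) (at x)) \<and>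
            (\<forall>i j. continuous_on \<Omega> (\<lambda>x. H x (axis i 1) $ j)) \<and>
            (\<forall>x\<in>\<Omega>. (\<Sum>i\<in>UNIV. H x (axis i 1) $ i) = 0))"

definition crit_exp :: "'n::finite itself \<Rightarrow> real" where
  "crit_exp TYPE('n) = 2 * real CARD('n) / (real CARD('n) - 2)"

(* v is a solution of (Q_{lambda,mu}): v in H^1_0, v > 0 a.e. in Omega, and weakly
   -Delta v = lam (v + mu phi) + (v + mu phi)^(2^*-1) *)
definition is_solution_Q :: "(real^'n::finite) set \<Rightarrow> (real^'n \<Rightarrow> real) \<Rightarrow> real \<Rightarrow> real \<Rightarrow> (real^'n \<Rightarrow> real) \<Rightarrow> bool" where
  "is_solution_Q \<Omega> \<phi> lam \<mu> v \<longleftrightarrow>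
     (\<exists>w. H10 \<Omega> v w \<and> (AE x in lebesgue. x \<in> \<Omega> \<longrightarrow> v x > 0) \<and>
        (\<forall>\<psi>. test_fun \<Omega> \<psi> \<longrightarrow>
           (let f = (\<lambda>x. lam * (v x + \<mu> * \<phi> x) + (v x + \<mu> * \<phi> x) powr (crit_exp TYPE('n) - 1))
            in set_integrable lebesgue \<Omega> (\<lambda>x. w x \<bullet> grad_cl \<psi> x) \<and>
               set_integrable lebesgue \<Omega> (\<lambda>x. f x * \<psi> x) \<and>
               (LINT x:\<Omega>|lebesgue. w x \<bullet> grad_cl \<psi> x) = (LINT x:\<Omega>|lebesgue. f x * \<psi> x))))"

end

theory Submission
  imports Defs "HOL-Computational_Algebra.Polynomial"
begin


fun HP :: "nat \<Rightarrow> real poly" where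
  "HP 0 = 1"
| "HP (Suc k) = [:0,0,1:] * (HP k - pderiv (HP k))"

definition hfun :: "nat \<Rightarrow> real \<Rightarrow> real" where
  "hfun k u = (if u > 0 then poly (HP k) (inverse u) * exp (- inverse u) else 0)"

lemma poly_exp_lim: "((\<lambda>y. poly p y * exp (- y)) \<longlongrightarrow> (0::real)) at_top"
proof -
  have "((\<lambda>y. \<Sum>i\<le>degree p. coeff p i * (y ^ i / exp y)) \<longlongrightarrow> (\<Sum>i\<le>degree p. coeff p i * 0)) at_top"
    by (intro tendsto_sum tendsto_mult tendsto_const tendsto_power_div_exp_0)
  then show ?thesis
    by (simp add: poly_altdef sum_distrib_right exp_minus divide_inverse mult.assoc)
qed

lemma poly_exp_lim0: "((\<lambda>h. poly p (inverse h) * exp (- inverse h)) \<longlongrightarrow> (0::real)) (at_right 0)"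
  using filterlim_compose[OF poly_exp_lim filterlim_inverse_at_top_right] by simp

lemma hd_deriv_pos:
  assumes "u > 0"
  shows "((\<lambda>u. poly P (inverse u) * exp (- inverse u)) has_real_derivative
          poly ([:0,0,1:] * (P - pderiv P)) (inverse u) * exp (- inverse u)) (at u)"
proof -
  have "((\<lambda>u. poly P (inverse u) * exp (- inverse u)) has_real_derivative
     (poly (pderiv P) (inverse u) * (- inverse (u^2))) * exp (- inverse u) + poly P (inverse u) * (exp (- inverse u) * inverse (u^2))) (at u)"
    using assms
    by (auto intro!: derivative_eq_intros DERIV_chain2[OF poly_DERIV] simp: power2_eq_square)
  then show ?thesis
    by (simp add: algebra_simps power2_eq_square power_inverse)
qed

lemma hd_deriv: "(hfun k has_real_derivative hfun (Suc k) u) (at u)"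
proof (cases "u > 0")
  case True
  show ?thesis
    apply (rule has_field_derivative_transform_within_open[where S="{0<..}"])
    using hd_deriv_pos[OF True, of "HP k"] True by (auto simp: hfun_def)
next
  case False
  show ?thesis
  proof (cases "u < 0")
    case True
    show ?thesis
      apply (rule has_field_derivative_transform_within_open[where f="\<lambda>_. 0" and S="{..<0}"])
      using True by (auto simp: hfun_def)
  next
    case False
    with \<open>\<not> u > 0\<close> have u: "u = 0" by simp
    have r: "((\<lambda>h. hfun k h / h) \<longlongrightarrow> 0) (at_right 0)"
    proof -
      have "((\<lambda>h. poly ([:0,1:] * HP k) (inverse h) * exp (- inverse h)) \<longlongrightarrow> 0) (at_right 0)"
        by (rule poly_exp_lim0)
      then show ?thesis
        apply (rule tendsto_cong[THEN iffD1, rotated])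
        by (auto simp: eventually_at_right_field hfun_def divide_inverse intro!: exI[of _ 1])
    qed
    have l: "((\<lambda>h. hfun k h / h) \<longlongrightarrow> 0) (at_left 0)"
      by (rule tendsto_eventually) (auto simp: eventually_at_left_field hfun_def intro!: exI[of _ "-1"])
    show ?thesis unfolding u DERIV_def
      using filterlim_split_at[OF l r] by (simp add: hfun_def)
  qed
qed

lemma Suc_choose': "Suc n choose k = (n choose k) + (if k = 0 then 0 else (n choose (k-1)))"
  by (cases k) simp_all

lemma leibniz_sum:
  fixes F G :: "nat \<Rightarrow> real"
  shows "(\<Sum>i = 0..n. real (n choose i) * (F (Suc i) * G (n-i) + F i * G (Suc (n-i)))) =
         (\<Sum>i = 0..Suc n. real (Suc n choose i) * F i * G (Suc n - i))"
proof -
  have e1: "(\<Sum>i = 0..Suc n. real (n choose i) * F i * G (Suc n - i)) = (\<Sum>i = 0..n. real (n choose i) * F i * G (Suc (n - i)))"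
    by (simp add: Suc_diff_le)
  have e2: "(\<Sum>i = 0..Suc n. real (if i = 0 then 0 else (n choose (i-1))) * F i * G (Suc n - i))
      = (\<Sum>i = 0..n. real (n choose i) * F (Suc i) * G (n - i))"
  proof -
    have "(\<Sum>i = 0..Suc n. real (if i = 0 then 0 else (n choose (i-1))) * F i * G (Suc n - i))
       = (\<Sum>i = Suc 0..Suc n. real (if i = 0 then 0 else (n choose (i-1))) * F i * G (Suc n - i))"
      by (subst sum.atLeast_Suc_atMost) simp_all
    also have "\<dots> = (\<Sum>i = 0..n. real (if Suc i = 0 then 0 else (n choose (Suc i-1))) * F (Suc i) * G (Suc n - Suc i))"
      by (rule sum.shift_bounds_cl_Suc_ivl)
    finally show ?thesis by simp
  qed
  have "(\<Sum>i = 0..Suc n. real (Suc n choose i) * F i * G (Suc n - i)) =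
        (\<Sum>i = 0..Suc n. real (n choose i) * F i * G (Suc n - i)) +
        (\<Sum>i = 0..Suc n. real (if i = 0 then 0 else (n choose (i-1))) * F i * G (Suc n - i))"
    unfolding Suc_choose' by (simp add: sum.distrib[symmetric] algebra_simps)
  also have "\<dots> = (\<Sum>i = 0..n. real (n choose i) * (F (Suc i) * G (n-i) + F i * G (Suc (n-i))))"
    unfolding e1 e2 by (simp add: sum.distrib[symmetric] algebra_simps)
  finally show ?thesis by simp
qed

lemma leibniz_chain:
  fixes F G :: "nat \<Rightarrow> real \<Rightarrow> real"
  assumes "\<And>k x. (F k has_real_derivative F (Suc k) x) (at x)"
    and "\<And>k x. (G k has_real_derivative G (Suc k) x) (at x)"
  shows "((\<lambda>x. \<Sum>i=0..n. real (n choose i) * F i x * G (n-i) x) has_real_derivative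
          (\<Sum>i=0..Suc n. real (Suc n choose i) * F i x * G (Suc n - i) x)) (at x)"
proof -
  have "((\<lambda>x. \<Sum>i=0..n. real (n choose i) * F i x * G (n-i) x) has_real_derivative
          (\<Sum>i=0..n. real (n choose i) * (F (Suc i) x * G (n-i) x + F i x * G (Suc (n-i)) x))) (at x)"
    by (rule derivative_eq_intros refl assms | simp add: algebra_simps)+
  then show ?thesis using leibniz_sum[of n "\<lambda>i. F i x" "\<lambda>i. G i x"] by simp
qed

lemma poly_ineq:
  fixes a b :: real
  assumes "0 \<le> a" "a \<le> 1" "0 \<le> b"
  shows "2*a^3 - a^4 + 2*a^2*b^2 + 2*b^3 - b^4 \<le> 200"
proof -
  have "a^3 \<le> 1" using assms by (simp add: power_le_one)
  moreover have "a^2*b^2 \<le> b^2" using assms by (simp add: mult_left_le_one_le power_le_one)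
  moreover have "2*b^2 + 2*b^3 - b^4 \<le> 198"
  proof (cases "b \<le> 4")
    case True
    have "b^2 \<le> 16" "b^3 \<le> 64" using True assms by (auto intro: order.trans[OF power_mono[of b 4]])
    moreover have "b^4 \<ge> 0" using assms by simp
    ultimately show ?thesis by (simp add: power_numeral_reduce)
  next
    case False
    have "b^4 = b * b^3" by (simp add: power_Suc[symmetric] del: power_Suc)
    also have "\<dots> \<ge> 4 * b^3" using False assms by (intro mult_right_mono) auto
    finally have "b^4 \<ge> 4 * b^3" .
    moreover have "b^3 = b * b^2" by (simp add: power_Suc[symmetric] del: power_Suc)
    moreover have "b * b^2 \<ge> 4 * b^2" using False assms by (intro mult_right_mono) auto
    moreover have "b^2 \<ge> 0" by simp
    ultimately show ?thesis by linarith
  qed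
  moreover have "a^4 \<ge> 0" using assms by simp
  ultimately show ?thesis by linarith
qed

definition Fh :: "nat \<Rightarrow> real \<Rightarrow> real" where "Fh k t = hfun k (1 + t)"
definition Gh :: "nat \<Rightarrow> real \<Rightarrow> real" where "Gh k t = (-1)^k * hfun k (1 - t)"
definition Db :: "nat \<Rightarrow> real \<Rightarrow> real" where
  "Db k t = (\<Sum>i=0..k. real (k choose i) * Fh i t * Gh (k-i) t)"

lemma Fh_deriv: "(Fh k has_real_derivative Fh (Suc k) t) (at t)"
proof -
  have "((\<lambda>t. hfun k (1 + t)) has_real_derivative hfun (Suc k) (1 + t) * 1) (at t)"
    by (rule DERIV_chain2[OF hd_deriv]) (auto intro!: derivative_eq_intros)
  then show ?thesis unfolding Fh_def by simp
qed

lemma Gh_deriv: "(Gh k has_real_derivative Gh (Suc k) t) (at t)"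
proof -
  have "((\<lambda>t. hfun k (1 - t)) has_real_derivative hfun (Suc k) (1 - t) * (-1)) (at t)"
    by (rule DERIV_chain2[OF hd_deriv]) (auto intro!: derivative_eq_intros)
  then show ?thesis unfolding Gh_def
    by (auto intro!: derivative_eq_intros)
qed

lemma Db_deriv: "(Db k has_real_derivative Db (Suc k) t) (at t)"
  unfolding Db_def by (rule leibniz_chain) (rule Fh_deriv Gh_deriv)+

lemma hd_nonpos: "u \<le> 0 \<Longrightarrow> hfun k u = 0" by (simp add: hfun_def)

lemma Db_zero: "\<bar>t\<bar> \<ge> 1 \<Longrightarrow> Db k t = 0"
  unfolding Db_def Fh_def Gh_def
  by (intro sum.neutral) (cases "t \<ge> 1"; auto simp: hd_nonpos)

lemma Db_0: "Db 0 t = hfun 0 (1 + t) * hfun 0 (1 - t)"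
  by (simp add: Db_def Fh_def Gh_def)

lemma hd0_nonneg: "hfun 0 u \<ge> 0" by (simp add: hfun_def)
lemma hd0_pos: "u > 0 \<Longrightarrow> hfun 0 u > 0" by (simp add: hfun_def)

lemma Db_0_nonneg: "Db 0 t \<ge> 0" by (simp add: Db_0 hd0_nonneg)
lemma Db_0_pos: "\<bar>t\<bar> < 1 \<Longrightarrow> Db 0 t > 0" by (simp add: Db_0 hd0_pos)

lemma Db_2_bound: "- Db 2 t \<le> 200 * Db 0 t"
proof (cases "\<bar>t\<bar> < 1")
  case False then show ?thesis by (simp add: Db_zero)
next
  case True
  define u1 where "u1 = 1 + t"
  define u2 where "u2 = 1 - t"
  have u: "u1 > 0" "u2 > 0" "u1 + u2 = 2" using True by (auto simp: u1_def u2_def)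
  define y1 where "y1 = inverse u1"
  define y2 where "y2 = inverse u2"
  define e where "e = exp (- y1) * exp (- y2)"
  have epos: "e > 0" by (simp add: e_def)
  have D2: "Db 2 t = e * (y2^2 * (y2^2 - 2*y2) - 2 * y1^2 * y2^2 + y1^2*(y1^2 - 2*y1))"
    using u unfolding Db_def Fh_def Gh_def hfun_def e_def y1_def y2_def u1_def u2_def
    by (simp add: numeral_2_eq_2 algebra_simps power2_eq_square pderiv_pCons)
  have D0: "Db 0 t = e" using u by (simp add: Db_0 hfun_def e_def y1_def y2_def u1_def u2_def)
  have P: "2*y2^3 - y2^4 + 2*y2^2*y1^2 + 2*y1^3 - y1^4 \<le> 200 \<and> 2*y1^3 - y1^4 + 2*y1^2*y2^2 + 2*y2^3 - y2^4 \<le> 200"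
  proof (cases "t \<ge> 0")
    case True
    then have "y1 \<le> 1" "y1 \<ge> 0" "y2 \<ge> 0" using u by (auto simp: y1_def y2_def u1_def inverse_le_1_iff)
    from poly_ineq[OF this(2,1,3)] show ?thesis by (simp add: algebra_simps)
  next
    case False
    then have "y2 \<le> 1" "y2 \<ge> 0" "y1 \<ge> 0" using u by (auto simp: y1_def y2_def u2_def inverse_le_1_iff)
    from poly_ineq[OF this(2,1,3)] show ?thesis by (simp add: algebra_simps)
  qed
  have "- Db 2 t = e * (2*y2^3 - y2^4 + 2*y2^2*y1^2 + 2*y1^3 - y1^4)"
    unfolding D2 by (simp add: algebra_simps power2_eq_square power3_eq_cube power4_eq_xxxx)
  also have "\<dots> \<le> e * 200" using P epos by (intro mult_left_mono) auto
  finally show ?thesis by (simp add: D0)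
qed



definition Dc :: "real \<Rightarrow> real \<Rightarrow> nat \<Rightarrow> real \<Rightarrow> real" where
  "Dc a r k t = Db k ((t - a) / r) / r ^ k"

lemma Dc_deriv:
  assumes "r \<noteq> 0"
  shows "(Dc a r k has_real_derivative Dc a r (Suc k) t) (at t)"
proof -
  have "((\<lambda>t. Db k ((t - a) / r)) has_real_derivative Db (Suc k) ((t - a) / r) * (1 / r)) (at t)"
    using assms by (intro DERIV_chain2[OF Db_deriv]) (auto intro!: derivative_eq_intros)
  then have "((\<lambda>t. Db k ((t - a) / r) / r ^ k) has_real_derivative Db (Suc k) ((t - a) / r) * (1 / r) / r ^ k) (at t)"
    by (rule DERIV_cdivide)
  then show ?thesis unfolding Dc_def by simp
qed

lemma Dc_cont: "r \<noteq> 0 \<Longrightarrow> continuous_on UNIV (Dc a r k)"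
  by (meson DERIV_isCont Dc_deriv continuous_at_imp_continuous_on)

definition Mf :: "real^'n::finite \<Rightarrow> real \<Rightarrow> ('n \<Rightarrow> nat) \<Rightarrow> real^'n \<Rightarrow> real" where
  "Mf y r k x = (\<Prod>i\<in>UNIV. Dc (y$i) r (k i) (x$i))"

lemma Mf_split: "Mf y r k x = Dc (y$i) r (k i) (x$i) * (\<Prod>j\<in>UNIV-{i}. Dc (y$j) r (k j) (x$j))"
  unfolding Mf_def by (simp add: prod.remove)

lemma Mf_dir_deriv:
  assumes "r \<noteq> 0"
  shows "((\<lambda>t. Mf y r k (x + t *\<^sub>R axis i 1)) has_real_derivative Mf y r (k(i := Suc (k i))) x) (at 0)"
proof -
  define R where "R = (\<Prod>j\<in>UNIV-{i}. Dc (y$j) r (k j) (x$j))"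
  have eq: "Mf y r k (x + t *\<^sub>R axis i 1) = Dc (y$i) r (k i) (x$i + t) * R" for t
  proof -
    have "(\<Prod>j\<in>UNIV-{i}. Dc (y$j) r (k j) ((x + t *\<^sub>R axis i 1)$j)) = R"
      unfolding R_def by (intro prod.cong) (auto simp: axis_def)
    then show ?thesis by (subst Mf_split[of _ _ _ _ i]) (simp add: axis_def)
  qed
  have eq2: "Mf y r (k(i := Suc (k i))) x = Dc (y$i) r (Suc (k i)) (x$i) * R"
  proof -
    have "(\<Prod>j\<in>UNIV-{i}. Dc (y$j) r ((k(i := Suc (k i))) j) (x$j)) = R"
      unfolding R_def by (intro prod.cong) auto
    then show ?thesis by (subst Mf_split[of _ _ _ _ i]) simp
  qed
  have "((\<lambda>t. Dc (y$i) r (k i) (x$i + t) * R) has_real_derivative Dc (y$i) r (Suc (k i)) (x$i + 0) * 1 * R) (at 0)"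
    by (intro DERIV_cmult_right DERIV_chain2[OF Dc_deriv[OF assms]]) (auto intro!: derivative_eq_intros)
  then show ?thesis unfolding eq eq2 by simp
qed

lemma pdiff_Mf: "r \<noteq> 0 \<Longrightarrow> pdiff i (Mf y r k) = Mf y r (k(i := Suc (k i)))"
  unfolding pdiff_def by (rule ext) (rule DERIV_imp_deriv[OF Mf_dir_deriv])

lemma foldr_Mf: "r \<noteq> 0 \<Longrightarrow> \<exists>k'. foldr pdiff is (Mf y r k) = Mf y r k'"
proof (induction "is")
  case Nil then show ?case by auto
next
  case (Cons a "is")
  then obtain k' where "foldr pdiff is (Mf y r k) = Mf y r k'" by auto
  then show ?case using pdiff_Mf[OF Cons.prems] by auto
qed

lemma Mf_cont: "r \<noteq> 0 \<Longrightarrow> continuous_on UNIV (Mf y r k)"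
  unfolding Mf_def
  by (intro continuous_on_prod continuous_on_compose2[OF Dc_cont] continuous_intros) auto

lemma smooth_Mf: "r \<noteq> 0 \<Longrightarrow> smooth_on UNIV (Mf y r k)"
  unfolding smooth_on_def
proof (intro allI conjI ballI)
  fix "is" i x
  assume r: "r \<noteq> 0"
  obtain k' where k': "foldr pdiff is (Mf y r k) = Mf y r k'" using foldr_Mf[OF r] by blast
  show "continuous_on UNIV (foldr pdiff is (Mf y r k))" unfolding k' by (rule Mf_cont[OF r])
  show "(\<lambda>t. foldr pdiff is (Mf y r k) (x + t *\<^sub>R axis i 1)) field_differentiable at 0"
    unfolding k' field_differentiable_def using Mf_dir_deriv[OF r] by blast
qed

lemma Mf_supp:
  assumes "r > 0" "Mf y r k x \<noteq> 0"
  shows "\<bar>x$i - y$i\<bar> < r"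
proof (rule ccontr)
  assume "\<not> ?thesis"
  then have "\<bar>(x$i - y$i) / r\<bar> \<ge> 1" using assms by (simp add: abs_div)
  then have "Dc (y$i) r (k i) (x$i) = 0" by (simp add: Dc_def Db_zero)
  then show False using assms(2) Mf_split[of y r k x i] by simp
qed

lemma Mf0_pos:
  assumes "r > 0" "\<forall>i. \<bar>x$i - y$i\<bar> < r"
  shows "Mf y r (\<lambda>_. 0) x > 0"
  unfolding Mf_def Dc_def using assms
  by (intro prod_pos) (auto intro!: Db_0_pos simp: abs_div)

lemma Mf0_nonneg: "r > 0 \<Longrightarrow> Mf y r (\<lambda>_. 0) x \<ge> 0"
  unfolding Mf_def Dc_def by (intro prod_nonneg) (auto intro!: Db_0_nonneg)

lemma Mf_lap:
  assumes "r > 0"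
  shows "- Mf y r ((\<lambda>_. 0)(i := 2)) x \<le> (200 / r^2) * Mf y r (\<lambda>_. 0) x"
proof -
  define R where "R = (\<Prod>j\<in>UNIV-{i}. Dc (y$j) r 0 (x$j))"
  have R: "R \<ge> 0" unfolding R_def Dc_def by (intro prod_nonneg) (auto intro!: Db_0_nonneg)
  have e1: "Mf y r ((\<lambda>_. 0)(i := 2)) x = Dc (y$i) r 2 (x$i) * R"
  proof -
    have "(\<Prod>j\<in>UNIV-{i}. Dc (y$j) r (((\<lambda>_. 0)(i := 2)) j) (x$j)) = R"
      unfolding R_def by (intro prod.cong) auto
    then show ?thesis by (subst Mf_split[of _ _ _ _ i]) simp
  qed
  have e2: "Mf y r (\<lambda>_. 0) x = Dc (y$i) r 0 (x$i) * R"
    unfolding R_def by (subst Mf_split[of _ _ _ _ i]) simp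
  have "- Dc (y$i) r 2 (x$i) \<le> (200 / r^2) * Dc (y$i) r 0 (x$i)"
    using Db_2_bound[of "(x$i - y$i)/r"] assms unfolding Dc_def
    by (simp add: field_simps)
  then have "- Dc (y$i) r 2 (x$i) * R \<le> (200 / r^2) * Dc (y$i) r 0 (x$i) * R"
    using R by (intro mult_right_mono) auto
  then show ?thesis unfolding e1 e2 by simp
qed


lemma pw:
  fixes lam q K c0 \<mu> v ps ph Lap :: real
  assumes "lam > 0" "q > 1" "K \<ge> 0" "c0 > 0" "\<mu> > (max 1 K) powr (1/(q-1)) / c0"
    "v > 0" "ps > 0" "ph > c0" "Lap \<ge> - K * ps"
  shows "(lam*(v + \<mu>*ph) + (v + \<mu>*ph) powr q) * ps + v * Lap > 0"
proof -
  define s where "s = v + \<mu>*ph"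
  define m where "m = max 1 K"
  have m: "m > 0" "m \<ge> K" by (auto simp: m_def)
  have mu: "\<mu> * c0 > m powr (1/(q-1))" using assms(4,5) by (simp add: m_def field_simps)
  have "m powr (1/(q-1)) \<ge> 0" by simp
  then have mupos: "\<mu> > 0" using mu assms(4) by (smt (verit) mult_nonpos_nonneg)
  have "\<mu> * c0 \<le> \<mu> * ph" using mupos assms(8) by simp
  then have sge: "s > m powr (1/(q-1))" using mu assms(6) by (simp add: s_def)
  have spos: "s > 0" using sge by (smt (verit) powr_ge_zero)
  have "(m powr (1/(q-1))) powr (q-1) < s powr (q-1)"
    using sge assms(2) by (intro powr_less_mono2) auto
  moreover have "(m powr (1/(q-1))) powr (q-1) = m" using assms(2) m by (simp add: powr_powr)
  ultimately have sK: "s powr (q-1) > K" using m by simp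
  have "s powr q = s powr ((q-1) + 1)" by simp
  also have "\<dots> = s powr (q-1) * s powr 1" by (rule powr_add)
  also have "\<dots> = s powr (q-1) * s" using spos by simp
  finally have "s powr q \<ge> K * s" using sK spos by (simp add: mult_right_mono)
  have vs: "v \<le> s" using mupos assms(4,8) by (simp add: s_def)
  have "v * Lap \<ge> v * (- K * ps)" using assms(6,9) by (intro mult_left_mono) auto
  have "(lam * s + s powr q) * ps + v * Lap \<ge> (lam * s + K * s) * ps - K * v * ps"
  proof -
    have "K * s * ps \<le> s powr q * ps" using \<open>s powr q \<ge> K * s\<close> assms(7) by (simp add: mult_right_mono)
    then show ?thesis using \<open>v * Lap \<ge> v * (- K * ps)\<close> by (simp add: algebra_simps)
  qed
  moreover have "K * v * ps \<le> K * s * ps" using vs assms(3,7) by (simp add: mult_right_mono mult_left_mono)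
  moreover have "lam * s * ps > 0" using assms(1,7) spos by simp
  ultimately show ?thesis unfolding s_def[symmetric] by (simp add: algebra_simps)
qed

lemma pw0:
  fixes K v Lap F :: real
  assumes "v > 0" "Lap \<ge> - K * 0"
  shows "F * 0 + v * Lap \<ge> 0"
  using assms by simp


lemma box_measure_pos:
  fixes y :: "real^'n::finite"
  assumes "r > 0"
  shows "emeasure lborel (box (\<chi> i. y$i - r) (\<chi> i. y$i + r)) \<noteq> 0"
proof -
  have le: "\<And>b. b \<in> Basis \<Longrightarrow> (\<chi> i. y$i - r) \<bullet> b \<le> (\<chi> i. y$i + r) \<bullet> b"
    using assms by (auto simp: Basis_vec_def inner_axis)
  have pos: "\<And>b. b \<in> Basis \<Longrightarrow> ((\<chi> i. y$i + r) - (\<chi> i. y$i - r)) \<bullet> b > 0"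
    using assms by (auto simp: Basis_vec_def inner_axis)
  have "(\<Prod>b\<in>Basis. ((\<chi> i. y$i + r) - (\<chi> i. y$i - r)) \<bullet> b) > 0"
    using pos by (intro prod_pos) auto
  then show ?thesis using emeasure_lborel_box[OF le] pos by (simp add: less_imp_neq[symmetric])
qed

lemma abs_lt_iff': "(y - r < x \<and> x < y + r) \<longleftrightarrow> \<bar>x - y\<bar> < (r::real)" by arith
lemma abs_le_iff': "(y - r \<le> x \<and> x \<le> y + r) \<longleftrightarrow> \<bar>x - y\<bar> \<le> (r::real)" by arith

lemma mem_box_r:
  fixes y x :: "real^'n::finite"
  shows "x \<in> box (\<chi> i. y$i - r) (\<chi> i. y$i + r) \<longleftrightarrow> (\<forall>i. \<bar>x$i - y$i\<bar> < r)"
  by (simp add: mem_box_cart abs_lt_iff')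

lemma mem_cbox_r:
  fixes y x :: "real^'n::finite"
  shows "x \<in> cbox (\<chi> i. y$i - r) (\<chi> i. y$i + r) \<longleftrightarrow> (\<forall>i. \<bar>x$i - y$i\<bar> \<le> r)"
  by (simp add: mem_box_cart abs_le_iff')

lemma test_fun_Mf:
  fixes y :: "real^'n::finite"
  assumes "r > 0" "cbox (\<chi> i. y$i - r) (\<chi> i. y$i + r) \<subseteq> \<Omega>"
  shows "test_fun \<Omega> (Mf y r k)"
proof -
  have sub: "{x. Mf y r k x \<noteq> 0} \<subseteq> cbox (\<chi> i. y$i - r) (\<chi> i. y$i + r)"
    by (force simp: mem_cbox_r dest: Mf_supp[OF assms(1)] intro: less_imp_le)
  then have cl: "closure {x. Mf y r k x \<noteq> 0} \<subseteq> cbox (\<chi> i. y$i - r) (\<chi> i. y$i + r)"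
    by (intro closure_minimal) auto
  have "bounded {x. Mf y r k x \<noteq> 0}" using sub bounded_cbox bounded_subset by blast
  then show ?thesis unfolding test_fun_def
    using smooth_Mf[of r y k] assms cl by auto
qed



theorem lemma2p1:
  fixes \<Omega> :: "(real^'n::finite) set" and g \<phi> :: "real^'n \<Rightarrow> real" and lam :: real
  assumes "CARD('n) \<ge> 3"
    and "open \<Omega>" and "connected \<Omega>" and "bounded \<Omega>" and "smooth_boundary \<Omega>"
    and "continuous_on (frontier \<Omega>) g" and "H_half_boundary \<Omega> g"
    and "\<forall>x\<in>frontier \<Omega>. g x \<ge> 0" and "\<exists>x\<in>frontier \<Omega>. g x \<noteq> 0"
    and "harmonic_on \<Omega> \<phi>" and "continuous_on (closure \<Omega>) \<phi>"
    and "\<forall>x\<in>frontier \<Omega>. \<phi> x = g x"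
    and "0 < lam" and "lam < lambda1 \<Omega>"
  shows "bdd_above {\<mu>::real. \<mu> > 0 \<and> (\<exists>v. is_solution_Q \<Omega> \<phi> lam \<mu> v)}"
proof -
  define N where "N = real CARD('n)"
  have N3: "N \<ge> 3" using assms(1) unfolding N_def by linarith
  define q where "q = crit_exp TYPE('n) - 1"
  have q1: "q > 1"
  proof -
    have "2 * N / (N - 2) > 2" using N3 by (simp add: field_simps)
    then show ?thesis unfolding q_def crit_exp_def N_def by simp
  qed
  obtain x0 where x0: "x0 \<in> frontier \<Omega>" "g x0 \<noteq> 0" using assms(9) by blast
  have gx0: "g x0 > 0" using assms(8) x0 by force
  define c0 where "c0 = g x0 / 2"
  have c0: "c0 > 0" using gx0 by (simp add: c0_def)
  have x0cl: "x0 \<in> closure \<Omega>" using x0(1) by (simp add: frontier_def)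
  obtain d where d: "d > 0" "\<forall>x'\<in>closure \<Omega>. dist x' x0 < d \<longrightarrow> dist (\<phi> x') (\<phi> x0) < c0"
    using assms(11) x0cl c0 unfolding continuous_on_iff by blast
  have phix0: "\<phi> x0 = g x0" using assms(12) x0 by blast
  have phibig: "\<phi> x' > c0" if "x' \<in> closure \<Omega>" "dist x' x0 < d" for x'
  proof -
    have "\<bar>\<phi> x' - \<phi> x0\<bar> < c0" using d(2) that unfolding dist_real_def by blast
    then show ?thesis using phix0 unfolding c0_def by linarith
  qed
  obtain y where y: "y \<in> \<Omega>" "dist y x0 < d/2"
    using x0cl d(1) unfolding closure_approachable by (meson half_gt_zero)
  obtain e where e: "e > 0" "ball y e \<subseteq> \<Omega>" using assms(2) y(1) open_contains_ball by blast
  define e' where "e' = min e (d/2)"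
  have e': "e' > 0" "e' \<le> e" "e' \<le> d/2" using e d by (auto simp: e'_def)
  define r where "r = e' / (2 * N)"
  have r: "r > 0" using e' N3 by (simp add: r_def)
  have cube: "x \<in> \<Omega> \<and> \<phi> x > c0" if "\<forall>i. \<bar>x$i - y$i\<bar> \<le> r" for x
  proof -
    have "norm (x - y) \<le> (\<Sum>i\<in>UNIV. \<bar>(x - y)$i\<bar>)" by (rule norm_le_l1_cart)
    also have "\<dots> \<le> real (card (UNIV::'n set)) * r"
      using that by (intro sum_bounded_above) auto
    also have "\<dots> = e'/2" using N3 unfolding r_def N_def by simp
    finally have nx: "norm (x - y) \<le> e'/2" .
    then have "x \<in> ball y e" using e' by (simp add: dist_norm norm_minus_commute)
    then have xo: "x \<in> \<Omega>" using e by blast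
    have "dist x x0 \<le> dist x y + dist y x0" by (rule dist_triangle)
    also have "\<dots> < d" using nx e' y(2) by (simp add: dist_norm)
    finally show ?thesis using xo phibig closure_subset by blast
  qed
  have cbsub: "cbox (\<chi> i. y$i - r) (\<chi> i. y$i + r) \<subseteq> \<Omega>"
    using cube by (auto simp: mem_cbox_r)
  define B where "B = box (\<chi> i. y$i - r) (\<chi> i. y$i + r)"
  define \<psi> where "\<psi> = Mf y r (\<lambda>_. 0)"
  define \<psi>1 where "\<psi>1 i = Mf y r ((\<lambda>_. 0)(i := 1))" for i
  define L where "L i = Mf y r ((\<lambda>_. 0)(i := 2))" for i
  have pd1: "pdiff i \<psi> = \<psi>1 i" for i
    unfolding \<psi>_def \<psi>1_def using pdiff_Mf[of r i y "\<lambda>_. 0"] r by simp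
  have pd2: "pdiff i (\<psi>1 i) = L i" for i
    unfolding L_def \<psi>1_def using pdiff_Mf[of r i y "(\<lambda>_. 0)(i := 1)"] r
    by (simp add: numeral_2_eq_2)
  have tpsi: "test_fun \<Omega> \<psi>" unfolding \<psi>_def by (rule test_fun_Mf[OF r cbsub])
  have tpsi1: "test_fun \<Omega> (\<psi>1 i)" for i unfolding \<psi>1_def by (rule test_fun_Mf[OF r cbsub])
  define K where "K = N * (200 / r^2)"
  have K: "K \<ge> 0" using N3 by (simp add: K_def)
  have lap: "(\<Sum>i\<in>UNIV. L i x) \<ge> - K * \<psi> x" for x
  proof -
    have "(\<Sum>i\<in>UNIV. L i x) \<ge> (\<Sum>i\<in>(UNIV::'n set). - (200 / r^2) * \<psi> x)"
      unfolding L_def \<psi>_def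
    proof (intro sum_mono)
      fix i
      show "- (200 / r^2) * Mf y r (\<lambda>_. 0) x \<le> Mf y r ((\<lambda>_. 0)(i := 2)) x"
        using Mf_lap[OF r, of y i x] by simp
    qed
    also have "(\<Sum>i\<in>(UNIV::'n set). - (200 / r^2) * \<psi> x) = - K * \<psi> x"
      by (simp add: K_def N_def)
    finally show ?thesis .
  qed
  have psi_nonneg: "\<psi> x \<ge> 0" for x unfolding \<psi>_def by (rule Mf0_nonneg[OF r])
  have psi_pos: "\<forall>i. \<bar>x$i - y$i\<bar> < r" if "\<psi> x \<noteq> 0" for x
    using Mf_supp[OF r] that unfolding \<psi>_def by blast
  define Mb where "Mb = (max 1 K) powr (1/(q-1)) / c0"
  show ?thesis
  proof (rule bdd_aboveI[of _ Mb])
    fix \<mu> assume "\<mu> \<in> {\<mu>::real. \<mu> > 0 \<and> (\<exists>v. is_solution_Q \<Omega> \<phi> lam \<mu> v)}"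
    then obtain v where sol: "is_solution_Q \<Omega> \<phi> lam \<mu> v" by blast
    show "\<mu> \<le> Mb"
    proof (rule ccontr)
      assume "\<not> \<mu> \<le> Mb"
      then have muM: "\<mu> > Mb" by simp
      obtain w where H: "H10 \<Omega> v w" and AEv: "AE x in lebesgue. x \<in> \<Omega> \<longrightarrow> v x > 0"
        and eqn: "\<forall>\<psi>. test_fun \<Omega> \<psi> \<longrightarrow>
           (let f = (\<lambda>x. lam * (v x + \<mu> * \<phi> x) + (v x + \<mu> * \<phi> x) powr (crit_exp TYPE('n) - 1))
            in set_integrable lebesgue \<Omega> (\<lambda>x. w x \<bullet> grad_cl \<psi> x) \<and>
               set_integrable lebesgue \<Omega> (\<lambda>x. f x * \<psi> x) \<and>
               (LINT x:\<Omega>|lebesgue. w x \<bullet> grad_cl \<psi> x) = (LINT x:\<Omega>|lebesgue. f x * \<psi> x))"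
        using sol unfolding is_solution_Q_def by blast
      have wg: "weak_grad \<Omega> v w" using H unfolding H10_def H1_def by blast
      define f where "f = (\<lambda>x. lam * (v x + \<mu> * \<phi> x) + (v x + \<mu> * \<phi> x) powr q)"
      have E: "set_integrable lebesgue \<Omega> (\<lambda>x. w x \<bullet> grad_cl \<psi> x)"
         "set_integrable lebesgue \<Omega> (\<lambda>x. f x * \<psi> x)"
         "(LINT x:\<Omega>|lebesgue. w x \<bullet> grad_cl \<psi> x) = (LINT x:\<Omega>|lebesgue. f x * \<psi> x)"
        using eqn[rule_format, OF tpsi] unfolding Let_def f_def q_def by auto
      have W: "set_integrable lebesgue \<Omega> (\<lambda>x. v x * L i x)"
        "set_integrable lebesgue \<Omega> (\<lambda>x. w x $ i * \<psi>1 i x)"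
        "(LINT x:\<Omega>|lebesgue. v x * L i x) = - (LINT x:\<Omega>|lebesgue. w x $ i * \<psi>1 i x)" for i
        using wg tpsi1[of i] unfolding weak_grad_def by (auto simp: pd2[symmetric])
      have inner: "w x \<bullet> grad_cl \<psi> x = (\<Sum>i\<in>UNIV. w x $ i * \<psi>1 i x)" for x
        unfolding grad_cl_def inner_vec_def pd1 by simp
      define G where "G x = f x * \<psi> x + (\<Sum>i\<in>UNIV. v x * L i x)" for x
      have Geq: "(\<lambda>x. indicator \<Omega> x *\<^sub>R G x) = (\<lambda>x. indicator \<Omega> x *\<^sub>R (f x * \<psi> x) + (\<Sum>i\<in>UNIV. indicator \<Omega> x *\<^sub>R (v x * L i x)))"
        unfolding G_def by (rule ext) (simp only: scaleR_add_right scaleR_sum_right)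
      have intG: "integrable lebesgue (\<lambda>x. indicator \<Omega> x *\<^sub>R G x)"
        unfolding Geq using E(2) W(1) unfolding set_integrable_def
        by (intro Bochner_Integration.integrable_add Bochner_Integration.integrable_sum) auto
      have ia: "integrable lebesgue (\<lambda>x. indicator \<Omega> x *\<^sub>R (f x * \<psi> x))"
        using E(2) unfolding set_integrable_def .
      have ib: "integrable lebesgue (\<lambda>x. indicator \<Omega> x *\<^sub>R (v x * L i x))" for i
        using W(1) unfolding set_integrable_def .
      have ic: "integrable lebesgue (\<lambda>x. \<Sum>i\<in>UNIV. indicator \<Omega> x *\<^sub>R (v x * L i x))"
        by (rule Bochner_Integration.integrable_sum) (rule ib)
      have id: "integral\<^sup>L lebesgue (\<lambda>x. \<Sum>i\<in>UNIV. indicator \<Omega> x *\<^sub>R (v x * L i x))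
          = (\<Sum>i\<in>UNIV. integral\<^sup>L lebesgue (\<lambda>x. indicator \<Omega> x *\<^sub>R (v x * L i x)))"
        by (rule Bochner_Integration.integral_sum) (rule ib)
      have "integral\<^sup>L lebesgue (\<lambda>x. indicator \<Omega> x *\<^sub>R G x) =
          (LINT x:\<Omega>|lebesgue. f x * \<psi> x) + (\<Sum>i\<in>UNIV. (LINT x:\<Omega>|lebesgue. v x * L i x))"
        unfolding Geq set_lebesgue_integral_def Bochner_Integration.integral_add[OF ia ic] id ..
      also have "\<dots> = (LINT x:\<Omega>|lebesgue. w x \<bullet> grad_cl \<psi> x) - (\<Sum>i\<in>UNIV. (LINT x:\<Omega>|lebesgue. w x $ i * \<psi>1 i x))"
        using E(3) W(3) by (simp add: sum_negf)
      also have "(LINT x:\<Omega>|lebesgue. w x \<bullet> grad_cl \<psi> x) = (\<Sum>i\<in>UNIV. (LINT x:\<Omega>|lebesgue. w x $ i * \<psi>1 i x))"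
        unfolding inner set_lebesgue_integral_def scaleR_sum_right using W(2) unfolding set_integrable_def
        by (intro Bochner_Integration.integral_sum) auto
      finally have int0: "integral\<^sup>L lebesgue (\<lambda>x. indicator \<Omega> x *\<^sub>R G x) = 0" by simp
      have Gpt: "G x \<ge> 0 \<and> (x \<in> B \<longrightarrow> G x > 0)" if "x \<in> \<Omega>" "v x > 0" for x
      proof -
        have lapx: "(\<Sum>i\<in>UNIV. L i x) \<ge> - K * \<psi> x" by (rule lap)
        have Gx: "G x = f x * \<psi> x + v x * (\<Sum>i\<in>UNIV. L i x)"
          unfolding G_def by (simp add: sum_distrib_left)
        show ?thesis
        proof (cases "\<psi> x = 0")
          case True
          then have "x \<notin> B" unfolding B_def mem_box_r \<psi>_def using Mf0_pos[OF r] by force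
          moreover have "G x \<ge> 0" unfolding Gx using True lapx that(2) by simp
          ultimately show ?thesis by simp
        next
          case False
          have in_c: "\<forall>i. \<bar>x$i - y$i\<bar> < r" using psi_pos[OF False] .
          have "\<phi> x > c0" using cube[of x] in_c by (simp add: less_imp_le)
          moreover have "\<psi> x > 0" using False psi_nonneg[of x] by simp
          ultimately have "G x > 0" unfolding Gx f_def
            using pw[OF assms(13) q1 K c0 _ that(2), of \<mu> "\<psi> x" "\<phi> x" "\<Sum>i\<in>UNIV. L i x"] muM lapx
            unfolding Mb_def by simp
          then show ?thesis by simp
        qed
      qed
      have AEnn: "AE x in lebesgue. 0 \<le> indicator \<Omega> x *\<^sub>R G x"
        using AEv by eventually_elim (auto simp: indicator_def dest: Gpt)
      have AE0: "AE x in lebesgue. indicator \<Omega> x *\<^sub>R G x = 0"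
        using integral_nonneg_eq_0_iff_AE[OF intG AEnn] int0 by simp
      have "AE x in lebesgue. x \<notin> B"
        using AE0 AEv
      proof eventually_elim
        case (elim x)
        show ?case
        proof
          assume xB: "x \<in> B"
          then have "x \<in> \<Omega>" using cbsub box_subset_cbox unfolding B_def by blast
          then show False using elim Gpt[of x] xB by (auto simp: indicator_def)
        qed
      qed
      then have "AE x in lborel. x \<notin> B" by (simp add: AE_completion_iff)
      moreover have "B \<in> sets lborel" unfolding B_def by simp
      ultimately have "emeasure lborel B = 0"
        using AE_iff_measurable[of B lborel "\<lambda>x. x \<notin> B"] by simp
      then show False using box_measure_pos[OF r, of y] unfolding B_def by simp
    qed
  qed
qed


end
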